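(* Assume the labeled data contain at least one point with $y_i=1$ and at least one with $y_i=-1$, $\tau\in\{0,\dots,m\}$, and let $M_0$ be the valid big-$M$ $M_0:=2\sqrt{2(2C_1\bar n+C_2(m-\tau))}\max_{i}\|x^i\|+1$ with $\bar n:=|\{i\in[1,n]:y_i=-1\}|$. Let $(\bar\omega,\bar b,\bar\xi,\bar\eta,\bar z)$ be a feasible point of (P3) (with constant $M_0$) with objective value $\bar f$, and let $(\omega^*,b^*,\xi^*,\eta^*,z^* )$ be an optimal solution of (P3) (with constant $M_0$) with optimal value $f^*$. Let $P_u:=\{i\in[n+1,N]:(\omega^* )^\top x^i+b^*>0\}$, $N_u:=\{i\in[n+1,N]:(\omega^* )^\top x^i+b^*<0\}$, let $S_p\subseteq P_u$, $S_n\subseteq N_u$ be arbitrary, and let $s\in[n+1,N]\setminus(S_p\cup S_n)$ with $\bar\omega^\top x^s+\bar b<0$. Consider Problem (P5) with constant $M:=2\sqrt{2\bar f}\max_{i\in[1,N]}\|x^i\|+1$. Then: (a) the objective value $\tilde f$ of any feasible point of (P5) satisfies $f^*\le\tilde f$; (b) if $\tilde f$ is the optimal value of (P5) and $\bar f<\tilde f$, then $(\omega^* )^\top x^s+b^*<0$, i.e., $s\in N_u$.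
   Context: Data: points $x^1,\dots,x^N\in\mathbb{R}^d$; the first $n$ are labeled with $y_i\in\{-1,1\}$, the remaining $m:=N-n$ points are unlabeled; $[a,b]=\{a,\dots,b\}$; Euclidean norm. Parameters $C_1,C_2>0$, integer $\tau$. Objective $F(\omega,\xi,\eta):=\tfrac12\|\omega\|^2+C_1\sum_{i=1}^n\xi_i+C_2(\eta_1+\eta_2)$. Problem (P3) with constant $M$: minimize $F$ over $\omega\in\mathbb{R}^d,b\in\mathbb{R},\xi\in\mathbb{R}^n,\eta\in\mathbb{R}^2$, $z_i\in\{0,1\}$ ($i\in[n+1,N]$) subject to $y_i(\omega^\top x^i+b)\ge1-\xi_i$ ($i\in[1,n]$); $-(1-z_i)M\le\omega^\top x^i+b\le z_iM$ ($i\in[n+1,N]$); $\tau-\eta_1\le\sum_{i=n+1}^Nz_i\le\tau+\eta_2$; $\xi\ge0$; $\eta\ge0$. Problem (P5) (for given $S_p,S_n,s$ and constant $M$): minimize $F$ over $\omega,b,\xi,\eta$ and $z_i\in\{0,1\}$ for $i\in[n+1,N]\setminus(S_p\cup S_n)$, subject to $y_i(\omega^\top x^i+b)\ge1-\xi_i$ ($i\in[1,n]$); $-(1-z_i)M\le\omega^\top x^i+b\le z_iM$ for $i\in[n+1,N]\setminus(\{s\}\cup S_p\cup S_n)$; $\omega^\top x^i+b\ge0$ for $i\in S_p$; $\omega^\top x^i+b\le0$ for $i\in S_n$; $0\le\omega^\top x^s+b\le z_sM$; $\tau-\eta_1\le|S_p|+\sum_{i\in[n+1,N]\setminus(S_p\cup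 S_n)}z_i\le\tau+\eta_2$; $\xi_i\ge0$ ($i\in[1,n]$); $\eta_1,\eta_2\ge0$. *)

theory Defs
  imports "HOL-Analysis.Analysis"
begin

text \<open>Data: points x i in real^'d for i in {1..N}; the first n are labeled with y i in {-1,1}.
  Variables: omega (w), b, xi (indexed by {1..n}), eta = (e1, e2), z (binary, indexed by {n+1..N}).\<close>

definition obj :: "real \<Rightarrow> real \<Rightarrow> nat \<Rightarrow> real^'d \<Rightarrow> (nat \<Rightarrow> real) \<Rightarrow> real \<Rightarrow> real \<Rightarrow> real" where
  "obj C1 C2 n w xi e1 e2 = (1/2) * (norm w)^2 + C1 * (\<Sum>i=1..n. xi i) + C2 * (e1 + e2)"

definition P3_feas ::
  "(nat \<Rightarrow> real^'d) \<Rightarrow> (nat \<Rightarrow> real) \<Rightarrow> nat \<Rightarrow> nat \<Rightarrow> nat \<Rightarrow> real \<Rightarrow>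
   real^'d \<Rightarrow> real \<Rightarrow> (nat \<Rightarrow> real) \<Rightarrow> real \<Rightarrow> real \<Rightarrow> (nat \<Rightarrow> real) \<Rightarrow> bool" where
  "P3_feas x y n N tau M w b xi e1 e2 z \<longleftrightarrow>
     (\<forall>i\<in>{1..n}. y i * (inner w (x i) + b) \<ge> 1 - xi i) \<and>
     (\<forall>i\<in>{n+1..N}. z i \<in> {0, 1} \<and>
        - (1 - z i) * M \<le> inner w (x i) + b \<and> inner w (x i) + b \<le> z i * M) \<and>
     real tau - e1 \<le> (\<Sum>i=n+1..N. z i) \<and> (\<Sum>i=n+1..N. z i) \<le> real tau + e2 \<and>
     (\<forall>i\<in>{1..n}. xi i \<ge> 0) \<and> e1 \<ge> 0 \<and> e2 \<ge> 0"

text \<open>Feasibility for (P5) with sets Sp, Sn, index s and big-M constant M.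
  z is only a variable on {n+1..N} - (Sp \<union> Sn); its other values are irrelevant.\<close>
definition P5_feas ::
  "(nat \<Rightarrow> real^'d) \<Rightarrow> (nat \<Rightarrow> real) \<Rightarrow> nat \<Rightarrow> nat \<Rightarrow> nat \<Rightarrow> real \<Rightarrow> nat set \<Rightarrow> nat set \<Rightarrow> nat \<Rightarrow>
   real^'d \<Rightarrow> real \<Rightarrow> (nat \<Rightarrow> real) \<Rightarrow> real \<Rightarrow> real \<Rightarrow> (nat \<Rightarrow> real) \<Rightarrow> bool" where
  "P5_feas x y n N tau M Sp Sn s w b xi e1 e2 z \<longleftrightarrow>
     (\<forall>i\<in>{1..n}. y i * (inner w (x i) + b) \<ge> 1 - xi i) \<and>
     (\<forall>i\<in>{n+1..N} - (Sp \<union> Sn). z i \<in> {0, 1}) \<and>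
     (\<forall>i\<in>{n+1..N} - ({s} \<union> Sp \<union> Sn).
        - (1 - z i) * M \<le> inner w (x i) + b \<and> inner w (x i) + b \<le> z i * M) \<and>
     (\<forall>i\<in>Sp. inner w (x i) + b \<ge> 0) \<and>
     (\<forall>i\<in>Sn. inner w (x i) + b \<le> 0) \<and>
     0 \<le> inner w (x s) + b \<and> inner w (x s) + b \<le> z s * M \<and>
     real tau - e1 \<le> real (card Sp) + (\<Sum>i\<in>{n+1..N} - (Sp \<union> Sn). z i) \<and>
     real (card Sp) + (\<Sum>i\<in>{n+1..N} - (Sp \<union> Sn). z i) \<le> real tau + e2 \<and>
     (\<forall>i\<in>{1..n}. xi i \<ge> 0) \<and> e1 \<ge> 0 \<and> e2 \<ge> 0"

end

theory Submission
  imports Defs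
begin

lemma inner_bound:
  fixes w :: "real^'d"
  assumes "norm u \<le> R"
  shows "\<bar>inner w u\<bar> \<le> norm w * R"
  using Cauchy_Schwarz_ineq2[of w u] mult_left_mono[OF assms, of "norm w"] by simp

lemma shift_lemma:
  fixes x :: "nat \<Rightarrow> real^'d" and w :: "real^'d"
  assumes labels: "\<forall>i\<in>{1..n}. y i \<in> {-1, 1}"
    and pos: "\<exists>i\<in>{1..n}. y i = 1" and neg: "\<exists>i\<in>{1..n}. y i = -1"
    and lab: "\<forall>i\<in>{1..n}. y i * (inner w (x i) + b) \<ge> 1 - xi i"
    and xi0: "\<forall>i\<in>{1..n}. xi i \<ge> 0"
    and R: "\<forall>i\<in>{1..N}. norm (x i) \<le> R" and nN: "n \<le> N"
  shows "\<exists>b' xi'. (\<forall>i\<in>{1..n}. y i * (inner w (x i) + b') \<ge> 1 - xi' i) \<and> (\<forall>i\<in>{1..n}. xi' i \<ge> 0)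
     \<and> (\<forall>i\<in>{1..N}. \<bar>inner w (x i) + b'\<bar> \<le> 2 * norm w * R + 1)
     \<and> (\<forall>i\<in>{1..N}. (inner w (x i) + b \<ge> 0 \<longrightarrow> inner w (x i) + b' \<ge> 0)
                   \<and> (inner w (x i) + b \<le> 0 \<longrightarrow> inner w (x i) + b' \<le> 0))
     \<and> (\<Sum>i=1..n. xi' i) \<le> (\<Sum>i=1..n. xi i)
     \<and> (b' \<noteq> b \<longrightarrow> (\<Sum>i=1..n. xi' i) < (\<Sum>i=1..n. xi i))"
proof -
  define W where "W = norm w"
  have ib: "\<bar>inner w (x i)\<bar> \<le> W * R" if "i \<in> {1..N}" for i
    using inner_bound[of "x i" R w] R that W_def by auto
  have sub: "{1..n} \<subseteq> {1..N}" using nN by auto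
  consider "b > W * R + 1" | "b < -(W * R + 1)" | "\<bar>b\<bar> \<le> W * R + 1" by linarith
  then show ?thesis
  proof cases
    case 1
    define d where "d = b - (W * R + 1)"
    define xi' where "xi' = (\<lambda>i. if y i = -1 then xi i - d else xi i)"
    have d0: "d > 0" using 1 d_def by simp
    have A: "\<forall>i\<in>{1..n}. y i * (inner w (x i) + (W*R+1)) \<ge> 1 - xi' i"
    proof
      fix i assume i: "i \<in> {1..n}"
      have iN: "i \<in> {1..N}" using i sub by auto
      show "y i * (inner w (x i) + (W*R+1)) \<ge> 1 - xi' i"
      proof -
        have yi: "y i = -1 \<or> y i = 1" using labels i by auto
        have li: "y i * (inner w (x i) + b) \<ge> 1 - xi i" using lab i by auto
        have x0: "xi i \<ge> 0" using xi0 i by auto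
        show ?thesis using yi li x0 ib[OF iN] d_def unfolding xi'_def by (auto simp: abs_le_iff)
      qed
    qed
    have B: "\<forall>i\<in>{1..n}. xi' i \<ge> 0"
    proof
      fix i assume i: "i \<in> {1..n}"
      have iN: "i \<in> {1..N}" using i sub by auto
      show "xi' i \<ge> 0"
      proof -
        have yi: "y i = -1 \<or> y i = 1" using labels i by auto
        have li: "y i * (inner w (x i) + b) \<ge> 1 - xi i" using lab i by auto
        have x0: "xi i \<ge> 0" using xi0 i by auto
        show ?thesis using yi li x0 ib[OF iN] d_def 1 unfolding xi'_def by (auto simp: abs_le_iff)
      qed
    qed
    have C: "\<forall>i\<in>{1..N}. \<bar>inner w (x i) + (W*R+1)\<bar> \<le> 2 * norm w * R + 1" (is "\<forall>i\<in>_. ?P i")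
    proof (intro ballI)
      fix i assume i: "i \<in> {1..N}"
      have h: "\<bar>inner w (x i)\<bar> \<le> W*R" using ib i .
      then show "?P i" using W_def by (auto simp: abs_le_iff mult.commute)
    qed
    have D: "\<forall>i\<in>{1..N}. (inner w (x i) + b \<ge> 0 \<longrightarrow> inner w (x i) + (W*R+1) \<ge> 0)
                   \<and> (inner w (x i) + b \<le> 0 \<longrightarrow> inner w (x i) + (W*R+1) \<le> 0)" (is "\<forall>i\<in>_. ?P i")
    proof (intro ballI)
      fix i assume i: "i \<in> {1..N}"
      have h: "\<bar>inner w (x i)\<bar> \<le> W*R" using ib i .
      then show "?P i" using 1 by (auto simp: abs_le_iff)
    qed
    have E: "(\<Sum>i=1..n. xi' i) < (\<Sum>i=1..n. xi i)"
      apply (rule sum_strict_mono_ex1)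
      using neg d0 unfolding xi'_def by auto
    have "W*R+1 \<noteq> b" using 1 by simp
    then show ?thesis using A B C D E by (intro exI[of _ "W*R+1"] exI[of _ xi']) auto
  next
    case 2
    define d where "d = -(W * R + 1) - b"
    define xi' where "xi' = (\<lambda>i. if y i = 1 then xi i - d else xi i)"
    have d0: "d > 0" using 2 d_def by simp
    have A: "\<forall>i\<in>{1..n}. y i * (inner w (x i) + -(W*R+1)) \<ge> 1 - xi' i"
    proof
      fix i assume i: "i \<in> {1..n}"
      have iN: "i \<in> {1..N}" using i sub by auto
      show "y i * (inner w (x i) + -(W*R+1)) \<ge> 1 - xi' i"
      proof -
        have yi: "y i = -1 \<or> y i = 1" using labels i by auto
        have li: "y i * (inner w (x i) + b) \<ge> 1 - xi i" using lab i by auto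
        have x0: "xi i \<ge> 0" using xi0 i by auto
        show ?thesis using yi li x0 ib[OF iN] d_def unfolding xi'_def by (auto simp: abs_le_iff)
      qed
    qed
    have B: "\<forall>i\<in>{1..n}. xi' i \<ge> 0"
    proof
      fix i assume i: "i \<in> {1..n}"
      have iN: "i \<in> {1..N}" using i sub by auto
      show "xi' i \<ge> 0"
      proof -
        have yi: "y i = -1 \<or> y i = 1" using labels i by auto
        have li: "y i * (inner w (x i) + b) \<ge> 1 - xi i" using lab i by auto
        have x0: "xi i \<ge> 0" using xi0 i by auto
        show ?thesis using yi li x0 ib[OF iN] d_def 2 unfolding xi'_def by (auto simp: abs_le_iff)
      qed
    qed
    have C: "\<forall>i\<in>{1..N}. \<bar>inner w (x i) + -(W*R+1)\<bar> \<le> 2 * norm w * R + 1" (is "\<forall>i\<in>_. ?P i")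
    proof (intro ballI)
      fix i assume i: "i \<in> {1..N}"
      have h: "\<bar>inner w (x i)\<bar> \<le> W*R" using ib i .
      then show "?P i" using W_def by (auto simp: abs_le_iff mult.commute)
    qed
    have D: "\<forall>i\<in>{1..N}. (inner w (x i) + b \<ge> 0 \<longrightarrow> inner w (x i) + -(W*R+1) \<ge> 0)
                   \<and> (inner w (x i) + b \<le> 0 \<longrightarrow> inner w (x i) + -(W*R+1) \<le> 0)" (is "\<forall>i\<in>_. ?P i")
    proof (intro ballI)
      fix i assume i: "i \<in> {1..N}"
      have h: "\<bar>inner w (x i)\<bar> \<le> W*R" using ib i .
      then show "?P i" using 2 by (auto simp: abs_le_iff)
    qed
    have E: "(\<Sum>i=1..n. xi' i) < (\<Sum>i=1..n. xi i)"
      apply (rule sum_strict_mono_ex1)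
      using pos d0 unfolding xi'_def by auto
    have "-(W*R+1) \<noteq> b" using 2 by simp
    then show ?thesis using A B C D E by (intro exI[of _ "-(W*R+1)"] exI[of _ xi']) auto
  next
    case 3
    have C: "\<forall>i\<in>{1..N}. \<bar>inner w (x i) + b\<bar> \<le> 2 * norm w * R + 1" (is "\<forall>i\<in>_. ?P i")
    proof (intro ballI)
      fix i assume i: "i \<in> {1..N}"
      have h: "\<bar>inner w (x i)\<bar> \<le> W*R" using ib i .
      then show "?P i" using W_def 3 by (auto simp: abs_le_iff mult.commute)
    qed
    show ?thesis using lab xi0 C by (intro exI[of _ b] exI[of _ xi]) auto
  qed
qed


lemma bigM_of_sign:
  fixes v z K M :: real
  assumes "z \<in> {0,1}" "z = 1 \<longrightarrow> v \<ge> 0" "z = 0 \<longrightarrow> v \<le> 0" "\<bar>v\<bar> \<le> K" "K \<le> M"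
  shows "- (1 - z) * M \<le> v \<and> v \<le> z * M"
  using assms by (auto simp: abs_le_iff)

lemma sign_of_bigM:
  fixes v z M :: real
  assumes "z \<in> {0,1}" "- (1 - z) * M \<le> v \<and> v \<le> z * M"
  shows "(z = 1 \<longrightarrow> v \<ge> 0) \<and> (z = 0 \<longrightarrow> v \<le> 0)"
  using assms by auto

lemma sum_split:
  fixes f :: "nat \<Rightarrow> real"
  assumes "finite A" "Sp \<subseteq> A" "Sn \<subseteq> A" "Sp \<inter> Sn = {}" "\<forall>i\<in>Sp. f i = 1" "\<forall>i\<in>Sn. f i = 0"
  shows "sum f A = real (card Sp) + sum f (A - (Sp \<union> Sn))"
proof -
  have fin: "finite Sp" "finite Sn" using assms(1,2,3) finite_subset by blast+
  have "sum f A = sum f (Sp \<union> Sn) + sum f (A - (Sp \<union> Sn))"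
    using sum.subset_diff[of "Sp \<union> Sn" A f] assms by auto
  also have "sum f (Sp \<union> Sn) = sum f Sp + sum f Sn"
    using sum.union_disjoint[OF fin] assms(4) by auto
  also have "sum f Sp = real (card Sp)" using assms(5) by simp
  also have "sum f Sn = 0" using assms(6) by simp
  finally show ?thesis by simp
qed

theorem lemma5p1:
  fixes x :: "nat \<Rightarrow> real^'d" and y :: "nat \<Rightarrow> real"
    and n N tau :: nat and C1 C2 :: real
    and wb :: "real^'d" and bb :: real and xib :: "nat \<Rightarrow> real" and e1b e2b :: real and zb :: "nat \<Rightarrow> real"
    and ws :: "real^'d" and bs :: real and xis :: "nat \<Rightarrow> real" and e1s e2s :: real and zs :: "nat \<Rightarrow> real"
    and Sp Sn :: "nat set" and s :: nat
  assumes nN: "n \<le> N"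
    and labels: "\<forall>i\<in>{1..n}. y i \<in> {-1, 1}"
    and pos: "\<exists>i\<in>{1..n}. y i = 1" and neg: "\<exists>i\<in>{1..n}. y i = -1"
    and C1: "C1 > 0" and C2: "C2 > 0"
    and tau: "tau \<le> N - n"
    and M0_def: "M0 = 2 * sqrt (2 * (2 * C1 * real (card {i\<in>{1..n}. y i = -1})
                          + C2 * (real (N - n) - real tau))) * Max ((\<lambda>i. norm (x i)) ` {1..N}) + 1"
    and bar_feas: "P3_feas x y n N tau M0 wb bb xib e1b e2b zb"
    and fbar: "fbar = obj C1 C2 n wb xib e1b e2b"
    and star_feas: "P3_feas x y n N tau M0 ws bs xis e1s e2s zs"
    and star_opt: "\<forall>w b xi e1 e2 z. P3_feas x y n N tau M0 w b xi e1 e2 z \<longrightarrow>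
                      obj C1 C2 n ws xis e1s e2s \<le> obj C1 C2 n w xi e1 e2"
    and fstar: "fstar = obj C1 C2 n ws xis e1s e2s"
    and Sp: "Sp \<subseteq> {i\<in>{n+1..N}. inner ws (x i) + bs > 0}"
    and Sn: "Sn \<subseteq> {i\<in>{n+1..N}. inner ws (x i) + bs < 0}"
    and s: "s \<in> {n+1..N} - (Sp \<union> Sn)" and s_neg: "inner wb (x s) + bb < 0"
    and M_def: "M = 2 * sqrt (2 * fbar) * Max ((\<lambda>i. norm (x i)) ` {1..N}) + 1"
  shows "(\<forall>w b xi e1 e2 z. P5_feas x y n N tau M Sp Sn s w b xi e1 e2 z \<longrightarrow>
            fstar \<le> obj C1 C2 n w xi e1 e2)
       \<and> (\<forall>ft. ((\<exists>w b xi e1 e2 z. P5_feas x y n N tau M Sp Sn s w b xi e1 e2 z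
                       \<and> ft = obj C1 C2 n w xi e1 e2)
                 \<and> (\<forall>w b xi e1 e2 z. P5_feas x y n N tau M Sp Sn s w b xi e1 e2 z
                       \<longrightarrow> ft \<le> obj C1 C2 n w xi e1 e2)
                 \<and> fbar < ft)
             \<longrightarrow> inner ws (x s) + bs < 0)"
proof -
  define R where "R = Max ((\<lambda>i. norm (x i)) ` {1..N})"
  define F0 where "F0 = 2 * C1 * real (card {i\<in>{1..n}. y i = -1}) + C2 * (real (N - n) - real tau)"
  have M0R: "M0 = 2 * sqrt (2 * F0) * R + 1" using M0_def R_def F0_def by simp
  have MR: "M = 2 * sqrt (2 * fbar) * R + 1" using M_def R_def by simp
  have n1: "n \<ge> 1" using pos by auto
  have Rb: "\<forall>i\<in>{1..N}. norm (x i) \<le> R" unfolding R_def by (auto intro: Max_ge)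
  have R0: "R \<ge> 0" using Rb n1 nN by (meson atLeastAtMost_iff norm_ge_zero order_trans le_trans)
  have disj: "Sp \<inter> Sn = {}" using Sp Sn by fastforce
  have SpN: "Sp \<subseteq> {n+1..N}" "Sn \<subseteq> {n+1..N}" using Sp Sn by auto
  have sN: "s \<in> {n+1..N}" using s by auto
  have nb: "norm w \<le> sqrt (2 * F)"
    if "\<forall>i\<in>{1..n}. xi i \<ge> 0" "e1 \<ge> 0" "e2 \<ge> 0" "obj C1 C2 n w xi e1 e2 \<le> F" for w xi e1 e2 F
  proof -
    have "(\<Sum>i=1..n. xi i) \<ge> 0" using that(1) by (intro sum_nonneg) auto
    then have "C1 * (\<Sum>i=1..n. xi i) \<ge> 0" using C1 by simp
    moreover have "C2 * (e1 + e2) \<ge> 0" using C2 that by simp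
    ultimately have "(norm w)^2 \<le> 2 * F" using that(4) unfolding obj_def by linarith
    then show ?thesis by (rule real_le_rsqrt)
  qed
  have fstarF0: "fstar \<le> F0"
  proof -
    define xt where "xt = (\<lambda>i. if y i = -1 then (2::real) else 0)"
    have feas: "P3_feas x y n N tau M0 0 1 xt 0 (real (N - n) - real tau) (\<lambda>_. 1)"
    proof -
      have "F0 \<ge> 0" unfolding F0_def using C1 C2 tau by (simp add: of_nat_diff)
      then have "M0 \<ge> 1" using M0R R0 by simp
      moreover have "\<forall>i\<in>{1..n}. y i * (inner 0 (x i) + 1) \<ge> 1 - xt i"
        using labels unfolding xt_def by auto
      moreover have "(\<Sum>i=n+1..N. (1::real)) = real (N - n)" by simp
      ultimately show ?thesis unfolding P3_feas_def xt_def using tau by auto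
    qed
    have "(\<Sum>i=1..n. xt i) = (\<Sum>i\<in>{i\<in>{1..n}. y i = -1}. 2)"
      unfolding xt_def using sum.inter_filter[of "{1..n}" "\<lambda>_. (2::real)" "\<lambda>i. y i = -1"] by simp
    then have "(\<Sum>i=1..n. xt i) = 2 * real (card {i\<in>{1..n}. y i = -1})" by simp
    then have "obj C1 C2 n 0 xt 0 (real (N - n) - real tau) = F0"
      unfolding obj_def F0_def by simp
    then show ?thesis using star_opt feas fstar by force
  qed
  have KM0: "2 * norm w * R + 1 \<le> M0" if "norm w \<le> sqrt (2 * F0)" for w :: "real^'d"
    using mult_right_mono[OF that R0] M0R by simp
  have toP3: "P3_feas x y n N tau M0 w b xi e1 e2 z"
    if lab: "\<forall>i\<in>{1..n}. y i * (inner w (x i) + b) \<ge> 1 - xi i"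
      and xi0: "\<forall>i\<in>{1..n}. xi i \<ge> 0" and e: "e1 \<ge> 0" "e2 \<ge> 0"
      and zc: "\<forall>i\<in>{n+1..N}. z i \<in> {0,1} \<and> (z i = 1 \<longrightarrow> inner w (x i) + b \<ge> 0)
                 \<and> (z i = 0 \<longrightarrow> inner w (x i) + b \<le> 0)"
      and ab: "\<forall>i\<in>{1..N}. \<bar>inner w (x i) + b\<bar> \<le> 2 * norm w * R + 1"
      and sm: "real tau - e1 \<le> (\<Sum>i=n+1..N. z i)" "(\<Sum>i=n+1..N. z i) \<le> real tau + e2"
      and nw: "norm w \<le> sqrt (2 * F0)"
    for w b xi e1 e2 z
  proof -
    have "\<forall>i\<in>{n+1..N}. z i \<in> {0, 1} \<and>
        - (1 - z i) * M0 \<le> inner w (x i) + b \<and> inner w (x i) + b \<le> z i * M0"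
    proof
      fix i assume i: "i \<in> {n+1..N}"
      have iN: "i \<in> {1..N}" using i by auto
      show "z i \<in> {0, 1} \<and> - (1 - z i) * M0 \<le> inner w (x i) + b \<and> inner w (x i) + b \<le> z i * M0"
        using zc i bigM_of_sign[of "z i" "inner w (x i) + b" "2 * norm w * R + 1" M0]
          ab iN KM0[OF nw] by auto
    qed
    then show ?thesis unfolding P3_feas_def using lab xi0 e sm by auto
  qed
  have objmono: "obj C1 C2 n w xi' e1 e2 \<le> obj C1 C2 n w xi e1 e2"
    if "(\<Sum>i=1..n. xi' i) \<le> (\<Sum>i=1..n. xi i)" for w xi' xi e1 e2
    using that C1 unfolding obj_def by simp
  have objstrict: "obj C1 C2 n w xi' e1 e2 < obj C1 C2 n w xi e1 e2"
    if "(\<Sum>i=1..n. xi' i) < (\<Sum>i=1..n. xi i)" for w xi' xi e1 e2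
    using that C1 unfolding obj_def by simp
  have fsfb: "fstar \<le> fbar" using star_opt[rule_format, OF bar_feas] fstar fbar by simp
  have partA: "\<forall>w b xi e1 e2 z. P5_feas x y n N tau M Sp Sn s w b xi e1 e2 z \<longrightarrow>
            fstar \<le> obj C1 C2 n w xi e1 e2"
  proof (intro allI impI)
    fix w b xi e1 e2 z
    assume P5: "P5_feas x y n N tau M Sp Sn s w b xi e1 e2 z"
    note P5u = P5[unfolded P5_feas_def]
    show "fstar \<le> obj C1 C2 n w xi e1 e2"
    proof (cases "obj C1 C2 n w xi e1 e2 \<le> F0")
      case False then show ?thesis using fstarF0 by simp
    next
      case True
      have nw: "norm w \<le> sqrt (2 * F0)" using nb[OF _ _ _ True] P5u by auto
      obtain b' xi' where sh:
        "(\<forall>i\<in>{1..n}. y i * (inner w (x i) + b') \<ge> 1 - xi' i)" "(\<forall>i\<in>{1..n}. xi' i \<ge> 0)"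
        "(\<forall>i\<in>{1..N}. \<bar>inner w (x i) + b'\<bar> \<le> 2 * norm w * R + 1)"
        "(\<forall>i\<in>{1..N}. (inner w (x i) + b \<ge> 0 \<longrightarrow> inner w (x i) + b' \<ge> 0)
                   \<and> (inner w (x i) + b \<le> 0 \<longrightarrow> inner w (x i) + b' \<le> 0))"
        "(\<Sum>i=1..n. xi' i) \<le> (\<Sum>i=1..n. xi i)"
      proof -
        have l1: "\<forall>i\<in>{1..n}. y i * (inner w (x i) + b) \<ge> 1 - xi i" using P5u by blast
        have l2: "\<forall>i\<in>{1..n}. xi i \<ge> 0" using P5u by blast
        show ?thesis using shift_lemma[OF labels pos neg l1 l2 Rb nN] that by blast
      qed
      define z' where "z' = (\<lambda>i. if i \<in> Sp then 1 else if i \<in> Sn then 0 else z i)"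
      have zc: "\<forall>i\<in>{n+1..N}. z' i \<in> {0,1} \<and> (z' i = 1 \<longrightarrow> inner w (x i) + b \<ge> 0)
                 \<and> (z' i = 0 \<longrightarrow> inner w (x i) + b \<le> 0)"
      proof
        fix i assume i: "i \<in> {n+1..N}"
        show "z' i \<in> {0,1} \<and> (z' i = 1 \<longrightarrow> inner w (x i) + b \<ge> 0)
                 \<and> (z' i = 0 \<longrightarrow> inner w (x i) + b \<le> 0)"
        proof (cases "i \<in> Sp")
          case True then show ?thesis using P5u disj unfolding z'_def by auto
        next
          case nSp: False
          show ?thesis
          proof (cases "i \<in> Sn")
            case True then show ?thesis using P5u nSp unfolding z'_def by auto
          next
            case nSn: False
            have zi: "z i \<in> {0,1}" using P5u i nSp nSn by auto
            show ?thesis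
            proof (cases "i = s")
              case True
              then show ?thesis using P5u zi nSp nSn unfolding z'_def by auto
            next
              case False
              have "- (1 - z i) * M \<le> inner w (x i) + b \<and> inner w (x i) + b \<le> z i * M"
                using P5u i nSp nSn False by auto
              then show ?thesis using zi nSp nSn unfolding z'_def by auto
            qed
          qed
        qed
      qed
      have zc': "\<forall>i\<in>{n+1..N}. z' i \<in> {0,1} \<and> (z' i = 1 \<longrightarrow> inner w (x i) + b' \<ge> 0)
                 \<and> (z' i = 0 \<longrightarrow> inner w (x i) + b' \<le> 0)"
      proof
        fix i assume i: "i \<in> {n+1..N}"
        then have "i \<in> {1..N}" by auto
        then show "z' i \<in> {0,1} \<and> (z' i = 1 \<longrightarrow> inner w (x i) + b' \<ge> 0)
                 \<and> (z' i = 0 \<longrightarrow> inner w (x i) + b' \<le> 0)" using zc i sh(4) by blast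
      qed
      have "(\<Sum>i=n+1..N. z' i) = real (card Sp) + (\<Sum>i\<in>{n+1..N} - (Sp \<union> Sn). z' i)"
        by (rule sum_split) (use SpN disj in \<open>auto simp: z'_def\<close>)
      also have "(\<Sum>i\<in>{n+1..N} - (Sp \<union> Sn). z' i) = (\<Sum>i\<in>{n+1..N} - (Sp \<union> Sn). z i)"
        by (rule sum.cong) (auto simp: z'_def)
      finally have sz: "(\<Sum>i=n+1..N. z' i) = real (card Sp) + (\<Sum>i\<in>{n+1..N} - (Sp \<union> Sn). z i)" .
      have "P3_feas x y n N tau M0 w b' xi' e1 e2 z'"
        by (rule toP3[OF sh(1,2) _ _ zc' sh(3) _ _ nw]) (use P5u sz in auto)
      then have "fstar \<le> obj C1 C2 n w xi' e1 e2" using star_opt[rule_format] fstar by blast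
      also have "\<dots> \<le> obj C1 C2 n w xi e1 e2" using objmono[OF sh(5)] .
      finally show ?thesis .
    qed
  qed
  have partB: "\<forall>ft. ((\<exists>w b xi e1 e2 z. P5_feas x y n N tau M Sp Sn s w b xi e1 e2 z
                       \<and> ft = obj C1 C2 n w xi e1 e2)
                 \<and> (\<forall>w b xi e1 e2 z. P5_feas x y n N tau M Sp Sn s w b xi e1 e2 z
                       \<longrightarrow> ft \<le> obj C1 C2 n w xi e1 e2)
                 \<and> fbar < ft)
             \<longrightarrow> inner ws (x s) + bs < 0"
  proof (intro allI impI)
    fix ft
    assume H: "(\<exists>w b xi e1 e2 z. P5_feas x y n N tau M Sp Sn s w b xi e1 e2 z
                       \<and> ft = obj C1 C2 n w xi e1 e2)
                 \<and> (\<forall>w b xi e1 e2 z. P5_feas x y n N tau M Sp Sn s w b xi e1 e2 z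
                       \<longrightarrow> ft \<le> obj C1 C2 n w xi e1 e2)
                 \<and> fbar < ft"
    show "inner ws (x s) + bs < 0"
    proof (rule ccontr)
      assume "\<not> inner ws (x s) + bs < 0"
      then have vs: "inner ws (x s) + bs \<ge> 0" by simp
      note SF = star_feas[unfolded P3_feas_def]
      have sx0: "\<forall>i\<in>{1..n}. xis i \<ge> 0" "e1s \<ge> 0" "e2s \<ge> 0" using SF by blast+
      have o1: "obj C1 C2 n ws xis e1s e2s \<le> F0" using fstar fstarF0 by simp
      have o2: "obj C1 C2 n ws xis e1s e2s \<le> fbar" using fstar fsfb by simp
      have nw: "norm ws \<le> sqrt (2 * F0)" using nb[OF sx0 o1] .
      have nw2: "norm ws \<le> sqrt (2 * fbar)" using nb[OF sx0 o2] .
      obtain b' xi' where sh: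
        "(\<forall>i\<in>{1..n}. y i * (inner ws (x i) + b') \<ge> 1 - xi' i)" "(\<forall>i\<in>{1..n}. xi' i \<ge> 0)"
        "(\<forall>i\<in>{1..N}. \<bar>inner ws (x i) + b'\<bar> \<le> 2 * norm ws * R + 1)"
        "(\<forall>i\<in>{1..N}. (inner ws (x i) + bs \<ge> 0 \<longrightarrow> inner ws (x i) + b' \<ge> 0)
                   \<and> (inner ws (x i) + bs \<le> 0 \<longrightarrow> inner ws (x i) + b' \<le> 0))"
        "(\<Sum>i=1..n. xi' i) \<le> (\<Sum>i=1..n. xis i)"
        "b' \<noteq> bs \<longrightarrow> (\<Sum>i=1..n. xi' i) < (\<Sum>i=1..n. xis i)"
      proof -
        have l1: "\<forall>i\<in>{1..n}. y i * (inner ws (x i) + bs) \<ge> 1 - xis i" using SF by blast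
        have l2: "\<forall>i\<in>{1..n}. xis i \<ge> 0" using SF by blast
        show ?thesis using shift_lemma[OF labels pos neg l1 l2 Rb nN] that by blast
      qed
      have zcs: "\<forall>i\<in>{n+1..N}. zs i \<in> {0,1} \<and> (zs i = 1 \<longrightarrow> inner ws (x i) + bs \<ge> 0)
                 \<and> (zs i = 0 \<longrightarrow> inner ws (x i) + bs \<le> 0)"
        using SF sign_of_bigM by blast
      have bb': "b' = bs"
      proof (rule ccontr)
        assume ne: "b' \<noteq> bs"
        have zc': "\<forall>i\<in>{n+1..N}. zs i \<in> {0,1} \<and> (zs i = 1 \<longrightarrow> inner ws (x i) + b' \<ge> 0)
                 \<and> (zs i = 0 \<longrightarrow> inner ws (x i) + b' \<le> 0)"
        proof
          fix i assume i: "i \<in> {n+1..N}"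
          then have "i \<in> {1..N}" by auto
          then show "zs i \<in> {0,1} \<and> (zs i = 1 \<longrightarrow> inner ws (x i) + b' \<ge> 0)
                 \<and> (zs i = 0 \<longrightarrow> inner ws (x i) + b' \<le> 0)" using zcs i sh(4) by blast
        qed
        have "P3_feas x y n N tau M0 ws b' xi' e1s e2s zs"
          by (rule toP3[OF sh(1,2) _ _ zc' sh(3) _ _ nw]) (use SF in auto)
        then have "fstar \<le> obj C1 C2 n ws xi' e1s e2s" using star_opt[rule_format] fstar by blast
        moreover have "obj C1 C2 n ws xi' e1s e2s < fstar"
          using objstrict sh(6) ne fstar by auto
        ultimately show False by simp
      qed
      have ab: "\<forall>i\<in>{1..N}. \<bar>inner ws (x i) + bs\<bar> \<le> M"
        using sh(3) bb' mult_right_mono[OF nw2 R0] MR by force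
      have P5: "P5_feas x y n N tau M Sp Sn s ws bs xis e1s e2s zs"
      proof -
        have c1: "\<forall>i\<in>{n+1..N} - ({s} \<union> Sp \<union> Sn).
            - (1 - zs i) * M \<le> inner ws (x i) + bs \<and> inner ws (x i) + bs \<le> zs i * M"
        proof
          fix i assume i: "i \<in> {n+1..N} - ({s} \<union> Sp \<union> Sn)"
          then have iN: "i \<in> {1..N}" by auto
          show "- (1 - zs i) * M \<le> inner ws (x i) + bs \<and> inner ws (x i) + bs \<le> zs i * M"
            using bigM_of_sign[of "zs i" "inner ws (x i) + bs" M M] zcs i ab iN by auto
        qed
        have c2: "inner ws (x s) + bs \<le> zs s * M"
        proof -
          have "zs s \<in> {0,1}" using zcs sN by auto
          moreover have "zs s = 0 \<longrightarrow> inner ws (x s) + bs \<le> 0" using zcs sN by auto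
          moreover have "inner ws (x s) + bs \<le> M"
          proof -
            have "s \<in> {1..N}" using sN by auto
            then have "\<bar>inner ws (x s) + bs\<bar> \<le> M" using ab by blast
            then show ?thesis by simp
          qed
          ultimately show ?thesis using vs by auto
        qed
        have sz: "(\<Sum>i=n+1..N. zs i) = real (card Sp) + (\<Sum>i\<in>{n+1..N} - (Sp \<union> Sn). zs i)"
        proof (rule sum_split)
          show "\<forall>i\<in>Sp. zs i = 1" using zcs Sp by fastforce
          show "\<forall>i\<in>Sn. zs i = 0" using zcs Sn by fastforce
        qed (use SpN disj in auto)
        show ?thesis unfolding P5_feas_def using SF c1 c2 vs sz Sp Sn by auto
      qed
      have "ft \<le> obj C1 C2 n ws xis e1s e2s" using H P5 by blast
      then show False using H fstar fsfb by simp
    qed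
  qed
  show ?thesis using partA partB by blast
qed

end
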